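(* Let $p(x)=a_dx^d+\cdots+a_1x$ be a real polynomial of degree $d\ge2$ with $p(0)=0$, $p'(0)=\lambda>1$, whose Fatou component $\mathcal{F}_\infty$ containing $\infty$ contains an angular region $W_\beta=\{z\ne0:|\arg z|<\beta\}$ for some $\beta>0$. Let $\Phi$ be the entire solution of $\Phi(\lambda z)=p(\Phi(z))$, $\Phi(0)=0$, $\Phi'(0)=1$, let $\rho=\log_\lambda d$, and let $F$ be the $1$-periodic holomorphic function on $\{|\Im w|<\beta/\log\lambda\}$ such that for all $\varepsilon>0$, $M>0$, $\Phi(z)=a_d^{-1/(d-1)}\exp\left(z^\rho F(\log_\lambda z)+o(|z|^{-M})\right)$ uniformly as $|z|\to\infty$ in $|\arg z|\le\beta-\varepsilon$. If $\rho<\frac12$, then $F$ is not constant.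
   Context: $\log_\lambda z=\log z/\log\lambda$. *)

theory Defs
  imports "HOL-Analysis.Analysis" "HOL-Computational_Algebra.Polynomial"
begin

definition normal_family_on :: "(nat \<Rightarrow> complex \<Rightarrow> complex) \<Rightarrow> complex set \<Rightarrow> bool" where
  "normal_family_on f U \<longleftrightarrow>
     (\<forall>r :: nat \<Rightarrow> nat. \<exists>s :: nat \<Rightarrow> nat. strict_mono s \<and>
        ((\<exists>g. \<forall>K. compact K \<and> K \<subseteq> U \<longrightarrow>
                 uniform_limit K (\<lambda>k. f (r (s k))) g sequentially)
         \<or> (\<forall>K. compact K \<and> K \<subseteq> U \<longrightarrow>
                 (\<forall>B. eventually (\<lambda>k. \<forall>z\<in>K. B \<le> norm (f (r (s k)) z)) sequentially))))"

definition fatou_set :: "(complex \<Rightarrow> complex) \<Rightarrow> complex set" where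
  "fatou_set f = {z. \<exists>U. open U \<and> z \<in> U \<and> normal_family_on (\<lambda>n. f ^^ n) U}"

text \<open>Finite part of the Fatou component containing \<infinity>: the points of the Fatou set whose
  connected component (in the Fatou set) contains a punctured neighbourhood of \<infinity>.\<close>
definition fatou_component_infty :: "(complex \<Rightarrow> complex) \<Rightarrow> complex set" where
  "fatou_component_infty f =
     {z \<in> fatou_set f. \<exists>R. \<forall>w. R < norm w \<longrightarrow> w \<in> connected_component_set (fatou_set f) z}"

definition angular_region :: "real \<Rightarrow> complex set" where
  "angular_region \<beta> = {z. z \<noteq> 0 \<and> \<bar>Arg z\<bar> < \<beta>}"

end

theory Submission
  imports Defs "HOL-Complex_Analysis.Complex_Analysis"
begin

lemma pow_diff_bound:
  fixes x y :: complex
  assumes "norm x \<le> M" "norm y \<le> M"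
  shows "norm (x^j - y^j) \<le> of_nat j * norm (x - y) * M^(j-1)"
proof (induction j)
  case 0 then show ?case by simp
next
  case (Suc j)
  have M0: "0 \<le> M" using assms(1) norm_ge_zero order_trans by blast
  have "x^Suc j - y^Suc j = x * (x^j - y^j) + (x - y) * y^j" by (simp add: algebra_simps)
  hence "norm (x^Suc j - y^Suc j) \<le> norm x * norm (x^j - y^j) + norm (x - y) * norm y ^ j"
    by (metis norm_mult norm_power norm_triangle_ineq)
  also have "\<dots> \<le> M * (of_nat j * norm (x - y) * M^(j-1)) + norm (x - y) * M^j"
    by (intro add_mono mult_mono Suc.IH power_mono assms) (auto simp: M0)
  also have "\<dots> = of_nat (Suc j) * norm (x - y) * M^(Suc j - 1)"
    by (cases j) (auto simp: algebra_simps)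
  finally show ?case .
qed

lemma binom_err:
  fixes \<eta> :: complex
  assumes "norm \<eta> \<le> 1"
  shows "norm ((1+\<eta>)^n - 1 - of_nat n * \<eta>) \<le> of_nat n * 2^n * norm \<eta> ^ 2"
proof (induction n)
  case 0 then show ?case by simp
next
  case (Suc n)
  have "(1+\<eta>)^Suc n - 1 - of_nat (Suc n) * \<eta> = (1+\<eta>) * ((1+\<eta>)^n - 1 - of_nat n * \<eta>) + of_nat n * \<eta>^2"
    by (simp add: algebra_simps power2_eq_square)
  hence "norm ((1+\<eta>)^Suc n - 1 - of_nat (Suc n) * \<eta>) \<le> norm (1+\<eta>) * norm ((1+\<eta>)^n - 1 - of_nat n * \<eta>) + of_nat n * norm \<eta> ^ 2"
    by (metis norm_mult norm_of_nat norm_power norm_triangle_ineq)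
  also have "\<dots> \<le> 2 * (of_nat n * 2^n * norm \<eta> ^ 2) + of_nat n * norm \<eta> ^ 2"
  proof -
    have "norm (1+\<eta>) \<le> 2" using assms norm_triangle_ineq[of 1 \<eta>] by simp
    thus ?thesis by (intro add_mono mult_mono Suc.IH) auto
  qed
  also have "\<dots> \<le> of_nat (Suc n) * 2^Suc n * norm \<eta> ^ 2"
  proof -
    have "real n \<le> 2^Suc n" by (metis less_exp of_nat_le_iff of_nat_numeral of_nat_power less_imp_le_nat Suc_lessD)
    hence "real n * norm \<eta> ^ 2 \<le> 2^Suc n * norm \<eta> ^ 2" by (intro mult_right_mono) auto
    thus ?thesis by (simp add: algebra_simps)
  qed
  finally show ?case .
qed

lemma poly_split:
  fixes q :: "complex poly"
  shows "poly q w = lead_coeff q * w ^ degree q + (\<Sum>j<degree q. coeff q j * w^j)"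
proof -
  have "{..degree q} = insert (degree q) {..<degree q}" by auto
  thus ?thesis by (simp add: poly_altdef)
qed

lemma rest_bound:
  fixes w :: complex
  assumes "norm w \<ge> 1" "d \<ge> 1"
  shows "norm (\<Sum>j<d. c j * w^j) \<le> (\<Sum>j<d. norm (c j)) * norm w ^ (d-1)"
proof -
  have "norm (\<Sum>j<d. c j * w^j) \<le> (\<Sum>j<d. norm (c j * w^j))" by (rule norm_sum)
  also have "\<dots> \<le> (\<Sum>j<d. norm (c j) * norm w ^ (d-1))"
  proof (intro sum_mono)
    fix j assume "j \<in> {..<d}"
    hence "norm w ^ j \<le> norm w ^ (d-1)" using assms by (intro power_increasing) auto
    thus "norm (c j * w^j) \<le> norm (c j) * norm w ^ (d-1)"
      by (simp add: norm_mult norm_power mult_left_mono)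
  qed
  also have "\<dots> = (\<Sum>j<d. norm (c j)) * norm w ^ (d-1)" by (simp add: sum_distrib_right)
  finally show ?thesis .
qed

lemma rest_diff:
  fixes b \<eta> :: complex
  assumes "norm b \<ge> 1" "norm \<eta> \<le> 1" "d \<ge> 1"
  shows "norm ((\<Sum>j<d. c j * (b*(1+\<eta>))^j) - (\<Sum>j<d. c j * b^j))
          \<le> (\<Sum>j<d. norm (c j)) * (of_nat d * 2^d) * norm \<eta> * norm b ^ (d-1)"
proof -
  have M: "norm (b*(1+\<eta>)) \<le> 2 * norm b" "norm b \<le> 2 * norm b"
  proof -
    have "norm (1+\<eta>) \<le> 2" using assms norm_triangle_ineq[of 1 \<eta>] by simp
    thus "norm (b*(1+\<eta>)) \<le> 2 * norm b" by (simp add: norm_mult mult.commute mult_left_mono)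
  qed simp
  have "norm ((\<Sum>j<d. c j * (b*(1+\<eta>))^j) - (\<Sum>j<d. c j * b^j))
       = norm (\<Sum>j<d. c j * ((b*(1+\<eta>))^j - b^j))"
    by (simp add: sum_subtractf[symmetric] algebra_simps)
  also have "\<dots> \<le> (\<Sum>j<d. norm (c j * ((b*(1+\<eta>))^j - b^j)))" by (rule norm_sum)
  also have "\<dots> \<le> (\<Sum>j<d. norm (c j) * ((of_nat d * 2^d) * norm \<eta> * norm b ^ (d-1)))"
  proof (intro sum_mono)
    fix j assume j: "j \<in> {..<d}"
    have "norm ((b*(1+\<eta>))^j - b^j) \<le> of_nat j * norm (b*(1+\<eta>) - b) * (2*norm b)^(j-1)"
      by (rule pow_diff_bound[OF M])
    also have "\<dots> = of_nat j * (norm b * norm \<eta>) * (2*norm b)^(j-1)"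
      by (simp add: algebra_simps norm_mult)
    also have "\<dots> \<le> (of_nat d * 2^d) * norm \<eta> * norm b ^ (d-1)"
    proof (cases j)
      case 0 then show ?thesis by simp
    next
      case (Suc i)
      have "of_nat j * (norm b * norm \<eta>) * (2*norm b)^(j-1) = (of_nat j * 2^i) * norm \<eta> * norm b ^ j"
        using Suc by (simp add: power_mult_distrib algebra_simps)
      also have "\<dots> \<le> (of_nat d * 2^d) * norm \<eta> * norm b ^ (d-1)"
      proof -
        have h1: "real j * 2 ^ i \<le> real d * 2 ^ d"
          using j Suc by (intro mult_mono) (auto intro: power_increasing)
        have h2: "norm b ^ j \<le> norm b ^ (d-1)" using j assms by (intro power_increasing) auto
        show ?thesis by (intro mult_mono h1 h2) auto
      qed
      finally show ?thesis .
    qed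
    finally show "norm (c j * ((b*(1+\<eta>))^j - b^j)) \<le> norm (c j) * ((of_nat d * 2^d) * norm \<eta> * norm b ^ (d-1))"
      by (simp add: norm_mult mult_left_mono)
  qed
  also have "\<dots> = (\<Sum>j<d. norm (c j)) * (of_nat d * 2^d) * norm \<eta> * norm b ^ (d-1)"
    using sum_distrib_right[where r="(of_nat d * 2^d) * norm \<eta> * norm b ^ (d-1)" and f="\<lambda>j. norm (c j)" and A="{..<d}"]
    by (simp only: mult.assoc)
  finally show ?thesis .
qed

lemma expansion:
  fixes q :: "complex poly"
  assumes d2: "degree q \<ge> 2"
  obtains R0 \<eta>0 where "R0 \<ge> 1" "\<eta>0 > 0"
    "\<And>b \<eta>. R0 \<le> norm b \<Longrightarrow> norm \<eta> \<le> \<eta>0 \<Longrightarrow>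
        norm \<eta> * norm (poly q b) \<le> norm (poly q (b*(1+\<eta>)) - poly q b)"
    "\<And>b. R0 \<le> norm b \<Longrightarrow> 2 * norm b \<le> norm (poly q b)"
proof -
  define d where "d = degree q"
  define a where "a = lead_coeff q"
  define rest where "rest = (\<lambda>w. \<Sum>j<d. coeff q j * w^j)"
  define C2 where "C2 = (\<Sum>j<d. norm (coeff q j))"
  define K where "K = real d * 2^d"
  define C1 where "C1 = C2 * K"
  define \<eta>0 where "\<eta>0 = min 1 (1/(2*K))"
  define R0 where "R0 = max 1 ((2*(C1+C2) + C2 + 2) / norm a)"
  have d1: "d \<ge> 1" "d \<ge> 2" using d2 d_def by auto
  have qne: "q \<noteq> 0" using d2 by auto
  have a0: "norm a > 0" using qne a_def by simp
  have K0: "K > 0" using d1 K_def by simp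
  have C20: "C2 \<ge> 0" unfolding C2_def by (simp add: sum_nonneg)
  have C10: "C1 \<ge> 0" unfolding C1_def using C20 K0 by simp
  have polyq: "\<And>w. poly q w = a * w^d + rest w"
    using poly_split a_def d_def rest_def by simp
  have big: "\<And>b::complex. R0 \<le> norm b \<Longrightarrow> norm a * norm b \<ge> 2*(C1+C2) + C2 + 2"
  proof -
    fix b :: complex assume "R0 \<le> norm b"
    hence "(2*(C1+C2) + C2 + 2) / norm a \<le> norm b" unfolding R0_def by simp
    thus "norm a * norm b \<ge> 2*(C1+C2) + C2 + 2" using a0 by (simp add: field_simps)
  qed
  have rb: "\<And>w. norm w \<ge> 1 \<Longrightarrow> norm (rest w) \<le> C2 * norm w ^ (d-1)"
    unfolding rest_def C2_def by (rule rest_bound) (use d1 in auto)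
  have pw: "\<And>w::complex. norm w \<ge> 1 \<Longrightarrow> norm w ^ d = norm w * norm w ^ (d-1)"
    using d1 by (metis Suc_diff_le diff_Suc_1 power_Suc)
  show ?thesis
  proof
    show "R0 \<ge> 1" unfolding R0_def by simp
    show "\<eta>0 > 0" unfolding \<eta>0_def using K0 by simp
  next
    fix b \<eta> :: complex assume b: "R0 \<le> norm b" and e: "norm \<eta> \<le> \<eta>0"
    define nb where "nb = norm b"
    define P where "P = nb ^ (d-1)"
    have nb1: "nb \<ge> 1" using b unfolding nb_def R0_def by simp
    have P0: "P \<ge> 0" unfolding P_def using nb1 by simp
    have e1: "norm \<eta> \<le> 1" and e2: "norm \<eta> \<le> 1/(2*K)" using e unfolding \<eta>0_def by auto
    have bigb: "norm a * nb \<ge> 2*(C1+C2) + C2 + 2" using big b nb_def by simp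
    have up: "norm (poly q b) \<le> norm a * nb * P + C2 * P"
    proof -
      have "norm (poly q b) \<le> norm (a * b^d) + norm (rest b)"
        using polyq norm_triangle_ineq by metis
      also have "\<dots> \<le> norm a * nb * P + C2 * P"
        using rb[of b] nb1 pw[of b] unfolding nb_def P_def by (simp add: norm_mult norm_power mult.assoc)
      finally show ?thesis .
    qed
    have diff: "poly q (b*(1+\<eta>)) - poly q b = a * b^d * ((1+\<eta>)^d - 1) + (rest (b*(1+\<eta>)) - rest b)"
      unfolding polyq by (simp add: power_mult_distrib[symmetric] algebra_simps)
    have rd: "norm (rest (b*(1+\<eta>)) - rest b) \<le> C1 * norm \<eta> * P"
      using rest_diff[of b \<eta> d "coeff q"] nb1 e1 d1 unfolding rest_def C1_def C2_def K_def P_def nb_def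
      by (simp add: mult_ac)
    have berr: "norm ((1+\<eta>)^d - 1 - of_nat d * \<eta>) \<le> K * norm \<eta> ^ 2"
      using binom_err[OF e1, of d] unfolding K_def by simp
    have "K * norm \<eta> ^ 2 \<le> norm \<eta> / 2"
    proof -
      have "K * norm \<eta> \<le> 1/2" using e2 K0 by (simp add: field_simps)
      hence "K * norm \<eta> * norm \<eta> \<le> 1/2 * norm \<eta>" by (intro mult_right_mono) auto
      thus ?thesis by (simp add: power2_eq_square mult_ac)
    qed
    have lowb: "norm ((1+\<eta>)^d - 1) \<ge> 3/2 * norm \<eta>"
    proof -
      have "norm (of_nat d * \<eta>) \<le> norm ((1+\<eta>)^d - 1) + norm ((1+\<eta>)^d - 1 - of_nat d * \<eta>)"
        by (metis add_diff_cancel_left' diff_add_cancel norm_triangle_sub norm_minus_commute)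
      moreover have "norm (of_nat d * \<eta>) = real d * norm \<eta>" by (simp add: norm_mult)
      moreover have "real d * norm \<eta> \<ge> 2 * norm \<eta>" using d1 by (intro mult_right_mono) auto
      ultimately show ?thesis using berr \<open>K * norm \<eta> ^ 2 \<le> norm \<eta> / 2\<close> by linarith
    qed
    have main: "norm (a * b^d * ((1+\<eta>)^d - 1)) \<ge> 3/2 * norm \<eta> * (norm a * nb * P)"
    proof -
      have "norm (a * b^d * ((1+\<eta>)^d - 1)) = (norm a * nb * P) * norm ((1+\<eta>)^d - 1)"
        using pw[of b] nb1 unfolding nb_def P_def by (simp add: norm_mult norm_power mult_ac)
      moreover have "(norm a * nb * P) * norm ((1+\<eta>)^d - 1) \<ge> (norm a * nb * P) * (3/2 * norm \<eta>)"
        using lowb a0 nb1 P0 by (intro mult_left_mono) auto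
      ultimately show ?thesis by (simp add: mult_ac)
    qed
    have "norm (poly q (b*(1+\<eta>)) - poly q b) \<ge> 3/2 * norm \<eta> * (norm a * nb * P) - C1 * norm \<eta> * P"
    proof -
      have "norm (a * b^d * ((1+\<eta>)^d - 1)) - norm (rest (b*(1+\<eta>)) - rest b)
            \<le> norm (a * b^d * ((1+\<eta>)^d - 1) + (rest (b*(1+\<eta>)) - rest b))"
        by (rule norm_diff_ineq)
      thus ?thesis unfolding diff[symmetric] using main rd by linarith
    qed
    moreover have "norm \<eta> * (norm a * nb * P + C2 * P) \<le> 3/2 * norm \<eta> * (norm a * nb * P) - C1 * norm \<eta> * P"
    proof -
      have "2*(C1 + C2) \<le> norm a * nb" using bigb C10 C20 by linarith
      hence h2: "(norm \<eta> * P) * (2*(C1 + C2)) \<le> (norm \<eta> * P) * (norm a * nb)"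
        using P0 by (intro mult_left_mono) auto
      have e1: "norm \<eta> * (norm a * nb * P + C2 * P) = (norm \<eta> * P) * (norm a * nb) + (norm \<eta> * P) * C2"
        by (simp add: algebra_simps)
      have e2: "3/2 * norm \<eta> * (norm a * nb * P) - C1 * norm \<eta> * P = 3/2 * ((norm \<eta> * P) * (norm a * nb)) - (norm \<eta> * P) * C1"
        by (simp add: algebra_simps)
      have e3: "(norm \<eta> * P) * (2*(C1 + C2)) = 2 * ((norm \<eta> * P) * C1) + 2 * ((norm \<eta> * P) * C2)"
        by (simp add: algebra_simps)
      show ?thesis unfolding e1 e2 using h2 unfolding e3 by linarith
    qed
    moreover have "norm \<eta> * norm (poly q b) \<le> norm \<eta> * (norm a * nb * P + C2 * P)"
      using up by (intro mult_left_mono) auto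
    ultimately show "norm \<eta> * norm (poly q b) \<le> norm (poly q (b*(1+\<eta>)) - poly q b)" by linarith
  next
    fix b :: complex assume b: "R0 \<le> norm b"
    define nb where "nb = norm b"
    define P where "P = nb ^ (d-1)"
    have nb1: "nb \<ge> 1" using b unfolding nb_def R0_def by simp
    have Pnb: "P \<ge> nb"
    proof -
      have "nb ^ 1 \<le> nb ^ (d-1)" using nb1 d1 by (intro power_increasing) auto
      thus ?thesis unfolding P_def by simp
    qed
    have bigb: "norm a * nb \<ge> 2*(C1+C2) + C2 + 2" using big b nb_def by simp
    have "norm (a * b^d) \<le> norm (poly q b) + norm (rest b)"
    proof -
      have "a * b^d = poly q b - rest b" using polyq[of b] by simp
      thus ?thesis using norm_triangle_ineq4[of "poly q b" "rest b"] by simp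
    qed
    moreover have "norm (a * b^d) = norm a * nb * P"
      using pw[of b] nb1 unfolding nb_def P_def by (simp add: norm_mult norm_power mult.assoc)
    moreover have "norm (rest b) \<le> C2 * P" using rb[of b] nb1 unfolding nb_def P_def by simp
    ultimately have "norm (poly q b) \<ge> P * (norm a * nb - C2)" by (simp add: algebra_simps)
    moreover have "P * (norm a * nb - C2) \<ge> nb * 2"
      using Pnb bigb C10 C20 nb1 by (intro mult_mono) auto
    ultimately show "2 * norm b \<le> norm (poly q b)" unfolding nb_def by simp
  qed
qed

lemma escape_big:
  fixes f :: "complex \<Rightarrow> complex"
  assumes esc: "\<And>w. R1 \<le> norm w \<Longrightarrow> 2 * norm w \<le> norm (f w)" and R1: "R1 \<ge> 1"
    and w: "R1 \<le> norm w"
  shows "\<forall>B. eventually (\<lambda>n. B \<le> norm ((f^^n) w)) sequentially"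
proof
  fix B :: real
  have ind: "R1 \<le> norm ((f^^n) w) \<and> 2^n * norm w \<le> norm ((f^^n) w)" for n
  proof (induction n)
    case 0 then show ?case using w by simp
  next
    case (Suc n)
    have "2 * norm ((f^^n) w) \<le> norm ((f^^Suc n) w)" using esc Suc by simp
    moreover have "norm ((f^^n) w) \<ge> 0" by simp
    ultimately show ?case using Suc R1 by (auto simp: algebra_simps)
  qed
  obtain N where N: "B < 2^N" using real_arch_pow[of 2 B] by auto
  show "eventually (\<lambda>n. B \<le> norm ((f^^n) w)) sequentially"
    unfolding eventually_sequentially
  proof (intro exI allI impI)
    fix n assume "N \<le> n"
    hence "(2::real)^N \<le> 2^n" by (intro power_increasing) auto
    moreover have "2^n * 1 \<le> 2^n * norm w" using w R1 by (intro mult_left_mono) auto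
    ultimately show "B \<le> norm ((f^^n) w)" using ind[of n] N by linarith
  qed
qed

lemma normal_escape_transfer:
  fixes f :: "complex \<Rightarrow> complex"
  assumes nf: "normal_family_on (\<lambda>n. f^^n) U" and v: "v1 \<in> U" "v2 \<in> U"
    and P1: "\<forall>B. eventually (\<lambda>n. B \<le> norm ((f^^n) v1)) sequentially"
  shows "\<forall>B. eventually (\<lambda>n. B \<le> norm ((f^^n) v2)) sequentially"
proof (rule ccontr)
  assume "\<not> ?thesis"
  then obtain B where "\<not> eventually (\<lambda>n. B \<le> norm ((f^^n) v2)) sequentially" by auto
  hence "frequently (\<lambda>n. norm ((f^^n) v2) < B) sequentially"
    by (simp add: not_eventually not_le)
  hence "infinite {n. norm ((f^^n) v2) < B}"
    by (simp add: frequently_cofinite[symmetric] cofinite_eq_sequentially)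
  then obtain r :: "nat \<Rightarrow> nat" where r: "strict_mono r" "\<And>n. norm ((f^^(r n)) v2) < B"
    using infinite_enumerate by blast
  from nf[unfolded normal_family_on_def, rule_format, of r] obtain s where
    s: "strict_mono s" and alt: "(\<exists>g. \<forall>K. compact K \<and> K \<subseteq> U \<longrightarrow>
                 uniform_limit K (\<lambda>k. (f^^(r (s k)))) g sequentially)
         \<or> (\<forall>K. compact K \<and> K \<subseteq> U \<longrightarrow>
                 (\<forall>B. eventually (\<lambda>k. \<forall>z\<in>K. B \<le> norm ((f^^(r (s k))) z)) sequentially))"
    by blast
  have K: "compact {v1, v2}" "{v1, v2} \<subseteq> U" using v by auto
  have "filterlim (r \<circ> s) sequentially sequentially"
    by (rule filterlim_subseq[OF strict_mono_o[OF r(1) s]])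
  hence rs: "filterlim (\<lambda>k. r (s k)) sequentially sequentially" by (simp add: comp_def)
  from alt show False
  proof
    assume "\<exists>g. \<forall>K. compact K \<and> K \<subseteq> U \<longrightarrow> uniform_limit K (\<lambda>k. (f^^(r (s k)))) g sequentially"
    then obtain g where "uniform_limit {v1, v2} (\<lambda>k. (f^^(r (s k)))) g sequentially" using K by blast
    hence lim: "(\<lambda>k. (f^^(r (s k))) v1) \<longlonglongrightarrow> g v1"
      by (rule tendsto_uniform_limitI) simp
    hence "eventually (\<lambda>k. dist ((f^^(r (s k))) v1) (g v1) < 1) sequentially"
      by (rule tendstoD) simp
    moreover have "eventually (\<lambda>k. norm (g v1) + 2 \<le> norm ((f^^(r (s k))) v1)) sequentially"
    proof -
      have "eventually (\<lambda>n. norm (g v1) + 2 \<le> norm ((f^^n) v1)) sequentially" using P1 by blast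
      thus ?thesis using filterlim_iff[THEN iffD1, OF rs, rule_format, of "\<lambda>n. norm (g v1) + 2 \<le> norm ((f^^n) v1)"] by simp
    qed
    ultimately have "eventually (\<lambda>k. False) sequentially"
    proof (rule eventually_elim2)
      fix k assume a: "dist ((f^^(r (s k))) v1) (g v1) < 1" and b: "norm (g v1) + 2 \<le> norm ((f^^(r (s k))) v1)"
      have "norm ((f^^(r (s k))) v1) \<le> norm (g v1) + dist ((f^^(r (s k))) v1) (g v1)"
        by (metis dist_norm norm_triangle_sub add.commute)
      thus False using a b by linarith
    qed
    thus False by simp
  next
    assume "\<forall>K. compact K \<and> K \<subseteq> U \<longrightarrow>
                 (\<forall>B. eventually (\<lambda>k. \<forall>z\<in>K. B \<le> norm ((f^^(r (s k))) z)) sequentially)"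
    hence "eventually (\<lambda>k. \<forall>z\<in>{v1,v2}. B \<le> norm ((f^^(r (s k))) z)) sequentially" using K by blast
    then obtain k where "\<forall>z\<in>{v1,v2}. B \<le> norm ((f^^(r (s k))) z)" using eventually_sequentially by auto
    thus False using r(2)[of "s k"] by auto
  qed
qed

lemma fatou_escape:
  fixes f :: "complex \<Rightarrow> complex"
  assumes esc: "\<And>w. R1 \<le> norm w \<Longrightarrow> 2 * norm w \<le> norm (f w)" and R1: "R1 \<ge> 1"
    and w0: "w0 \<in> fatou_component_infty f"
  shows "\<forall>B. eventually (\<lambda>n. B \<le> norm ((f^^n) w0)) sequentially"
proof -
  define P where "P = (\<lambda>w. \<forall>B. eventually (\<lambda>n. B \<le> norm ((f^^n) w)) sequentially)"
  define C where "C = connected_component_set (fatou_set f) w0"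
  from w0 obtain R where w0F: "w0 \<in> fatou_set f" and R: "\<And>w. R < norm w \<Longrightarrow> w \<in> C"
    unfolding fatou_component_infty_def C_def by blast
  define v :: complex where "v = of_real (max R R1 + 1)"
  have nv: "norm v = max R R1 + 1" unfolding v_def using R1 by simp
  have vC: "v \<in> C" using R nv by simp
  have "R1 \<le> norm v" unfolding nv by linarith
  hence Pv: "P v" unfolding P_def using escape_big[OF esc R1] by blast
  have CF: "C \<subseteq> fatou_set f" unfolding C_def by (rule connected_component_subset)
  have "P w0"
  proof (rule connected_induction_simple[of C v w0 P])
    show "connected C" unfolding C_def by (rule connected_connected_component)
    show "v \<in> C" by (rule vC)
    show "w0 \<in> C" unfolding C_def using w0F by simp
    show "P v" by (rule Pv)
  next
    fix a assume "a \<in> C"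
    hence "a \<in> fatou_set f" using CF by auto
    then obtain U where U: "open U" "a \<in> U" "normal_family_on (\<lambda>n. f^^n) U"
      unfolding fatou_set_def by blast
    show "\<exists>T. openin (top_of_set C) T \<and> a \<in> T \<and> (\<forall>x\<in>T. \<forall>y\<in>T. P x \<longrightarrow> P y)"
    proof (intro exI conjI ballI impI)
      show "openin (top_of_set C) (C \<inter> U)" using U(1) by (rule openin_open_Int)
      show "a \<in> C \<inter> U" using \<open>a \<in> C\<close> U by auto
    next
      fix x y assume "x \<in> C \<inter> U" "y \<in> C \<inter> U" "P x"
      hence "x \<in> U" "y \<in> U" by auto
      from normal_escape_transfer[OF U(3) this] \<open>P x\<close> show "P y" unfolding P_def by simp
    qed
  qed
  thus ?thesis unfolding P_def .
qed

lemma exp_minus_one_bound: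
  fixes z :: complex
  assumes "norm z \<le> 1"
  shows "norm (exp z - 1) \<le> 3 * norm z"
proof -
  have "norm (exp z - (\<Sum>i\<le>0. z ^ i / fact i)) \<le> exp (norm z) * (norm z ^ Suc 0) / fact 0"
    by (rule Taylor_exp_field)
  hence "norm (exp z - 1) \<le> exp (norm z) * norm z" by simp
  also have "\<dots> \<le> 3 * norm z"
  proof (rule mult_right_mono)
    have "exp (norm z) \<le> exp 1" using assms by simp
    also have "exp (1::real) \<le> 3" using exp_le by simp
    finally show "exp (norm z) \<le> 3" .
  qed simp
  finally show ?thesis .
qed

theorem corollary3:
  fixes p :: "real poly" and d :: nat and lam \<beta> :: real
    and \<Phi> :: "complex \<Rightarrow> complex" and F :: "complex \<Rightarrow> complex"
  defines "pc \<equiv> poly (map_poly complex_of_real p)"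
  defines "\<rho> \<equiv> log lam (real d)"
  defines "S \<equiv> {w :: complex. \<bar>Im w\<bar> < \<beta> / ln lam}"
  assumes deg: "degree p = d" and d2: "d \<ge> 2"
    and p0: "poly p 0 = 0"
    and pder: "poly (pderiv p) 0 = lam" and lam: "lam > 1"
    and beta: "\<beta> > 0"
    and fatou: "angular_region \<beta> \<subseteq> fatou_component_infty pc"
    and Phi_entire: "\<Phi> holomorphic_on UNIV"
    and Phi_eq: "\<And>z. \<Phi> (complex_of_real lam * z) = pc (\<Phi> z)"
    and Phi0: "\<Phi> 0 = 0" and Phi_deriv: "deriv \<Phi> 0 = 1"
    and F_holo: "F holomorphic_on S"
    and F_per: "\<And>w. w \<in> S \<Longrightarrow> F (w + 1) = F w"
    and F_asym: "\<And>\<epsilon> M. \<epsilon> > 0 \<Longrightarrow> M > 0 \<Longrightarrow>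
        \<exists>e :: complex \<Rightarrow> complex. \<forall>\<delta> > 0. \<exists>R. \<forall>z. z \<noteq> 0 \<and> \<bar>Arg z\<bar> \<le> \<beta> - \<epsilon> \<and> R \<le> norm z \<longrightarrow>
          \<Phi> z = complex_of_real (lead_coeff p) powr (- 1 / of_nat (d - 1))
                 * exp (z powr complex_of_real \<rho> * F (Ln z / complex_of_real (ln lam)) + e z)
          \<and> norm (e z) \<le> \<delta> * norm z powr (- M)"
    and rho: "\<rho> < 1 / 2"
  shows "\<not> (\<exists>c. \<forall>w\<in>S. F w = c)"
proof
  assume "\<exists>c. \<forall>w\<in>S. F w = c"
  then obtain c where Fc: "\<And>w. w \<in> S \<Longrightarrow> F w = c" by blast
  have lnlam: "ln lam > 0" using lam by simp
  have lnd: "ln (real d) > 0" using d2 by simp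
  have rho_eq: "\<rho> = ln (real d) / ln lam" unfolding \<rho>_def log_def by simp
  have rho0: "\<rho> > 0" using rho_eq lnlam lnd by simp
  have lnd_eq: "ln (real d) = \<rho> * ln lam" using rho_eq lnlam by simp
  define A where "A = complex_of_real (lead_coeff p) powr (- 1 / of_nat (d - 1))"
  have p0: "p \<noteq> 0" using deg d2 by auto
  have A0: "A \<noteq> 0" unfolding A_def powr_def using p0 by simp
  define \<beta>' where "\<beta>' = min (\<beta>/2) 1"
  have b'0: "\<beta>' > 0" "\<beta>' < \<beta>" "\<beta>' \<le> 1" unfolding \<beta>'_def using beta by auto
  obtain e where e: "\<forall>\<delta> > 0. \<exists>R. \<forall>z. z \<noteq> 0 \<and> \<bar>Arg z\<bar> \<le> \<beta> - (\<beta> - \<beta>') \<and> R \<le> norm z \<longrightarrow>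
          \<Phi> z = complex_of_real (lead_coeff p) powr (- 1 / of_nat (d - 1))
                 * exp (z powr complex_of_real \<rho> * F (Ln z / complex_of_real (ln lam)) + e z)
          \<and> norm (e z) \<le> \<delta> * norm z powr (- 1)"
    using F_asym[of "\<beta> - \<beta>'" 1] b'0 by auto
  then obtain R0' where R0': "\<forall>z. z \<noteq> 0 \<and> \<bar>Arg z\<bar> \<le> \<beta> - (\<beta> - \<beta>') \<and> R0' \<le> norm z \<longrightarrow>
          \<Phi> z = A * exp (z powr complex_of_real \<rho> * F (Ln z / complex_of_real (ln lam)) + e z)
          \<and> norm (e z) \<le> 1 * norm z powr (- 1)"
    unfolding A_def by force
  define R where "R = max R0' 1"
  have R1: "R \<ge> 1" unfolding R_def by simp
  have AZ: "\<Phi> z = A * exp (z powr complex_of_real \<rho> * c + e z) \<and> norm (e z) \<le> 1 / norm z"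
    if z: "z \<noteq> 0" "\<bar>Arg z\<bar> \<le> \<beta>'" "R \<le> norm z" for z
  proof -
    have "Ln z / complex_of_real (ln lam) \<in> S"
    proof -
      have "\<bar>Im (Ln z / complex_of_real (ln lam))\<bar> = \<bar>Arg z\<bar> / ln lam"
        using z lnlam by (simp add: Arg_eq_Im_Ln)
      also have "\<dots> < \<beta> / ln lam" using z b'0 lnlam by (simp add: divide_strict_right_mono)
      finally show ?thesis unfolding S_def by simp
    qed
    hence "F (Ln z / complex_of_real (ln lam)) = c" by (rule Fc)
    moreover have "norm z powr (-1) = 1 / norm z" using z by (simp add: powr_minus_divide)
    ultimately show ?thesis using R0'[rule_format, of z] z unfolding R_def by auto
  qed
  define Q where "Q = (\<lambda>u. \<Phi> (exp (Ln u / complex_of_real \<rho>)))"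
  have AS: "\<exists>\<epsilon>. Q u = A * exp (c * u + \<epsilon>) \<and> norm \<epsilon> \<le> 1 / norm u"
    if u: "u \<noteq> 0" "\<bar>Arg u\<bar> \<le> \<rho> * \<beta>'" "R \<le> norm u" for u
  proof -
    define z where "z = exp (Ln u / complex_of_real \<rho>)"
    have z0: "z \<noteq> 0" unfolding z_def by simp
    have ImL: "Im (Ln u / complex_of_real \<rho>) = Arg u / \<rho>" using u by (simp add: Arg_eq_Im_Ln)
    have "\<bar>Arg u / \<rho>\<bar> \<le> \<beta>'" using u rho0 by (simp add: abs_divide pos_divide_le_eq mult.commute)
    hence ImL2: "\<bar>Im (Ln u / complex_of_real \<rho>)\<bar> \<le> \<beta>'" unfolding ImL .
    have "\<bar>Im (Ln u / complex_of_real \<rho>)\<bar> < pi" using ImL2 b'0 pi_gt3 by linarith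
    hence i12: "- pi < Im (Ln u / complex_of_real \<rho>)" "Im (Ln u / complex_of_real \<rho>) \<le> pi"
      by (simp_all only: abs_less_iff) linarith+
    have Lnz: "Ln z = Ln u / complex_of_real \<rho>" unfolding z_def by (rule Ln_exp[OF i12])
    have Argz: "\<bar>Arg z\<bar> \<le> \<beta>'" using ImL2 Lnz z0 by (simp add: Arg_eq_Im_Ln)
    have nz: "norm z = exp (ln (norm u) / \<rho>)" unfolding z_def using u by (simp add: norm_exp_eq_Re)
    have "ln (norm u) \<ge> 0" using u R1 by simp
    moreover have "1 / \<rho> \<ge> 1" using rho0 rho by simp
    ultimately have "ln (norm u) \<le> ln (norm u) / \<rho>"
      using mult_left_mono[of 1 "1/\<rho>" "ln (norm u)"] by simp
    hence "exp (ln (norm u)) \<le> norm z" unfolding nz by simp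
    hence unz: "norm u \<le> norm z" using u R1 by simp
    have zp: "z powr complex_of_real \<rho> = u"
      using z0 Lnz rho0 u unfolding powr_def by simp
    from AZ[OF z0 Argz] unz u have
      "\<Phi> z = A * exp (u * c + e z) \<and> norm (e z) \<le> 1 / norm z" unfolding zp by simp
    moreover have "1 / norm z \<le> 1 / norm u" using unz u R1 by (simp add: frac_le)
    ultimately show ?thesis unfolding Q_def z_def[symmetric] by (metis mult.commute order_trans)
  qed
  have PhiIter: "\<Phi> (of_real (lam^k) * z) = (pc^^k) (\<Phi> z)" for k z
  proof (induction k)
    case 0 then show ?case by simp
  next
    case (Suc k)
    have "\<Phi> (of_real (lam^Suc k) * z) = \<Phi> (of_real lam * (of_real (lam^k) * z))" by (simp add: mult.assoc)
    also have "\<dots> = pc (\<Phi> (of_real (lam^k) * z))" by (rule Phi_eq)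
    finally show ?case using Suc by simp
  qed
  have QIter: "Q (of_real (real d ^ k) * u) = (pc^^k) (Q u)" if u0: "u \<noteq> 0" for k u
  proof -
    have dk: "real d ^ k > 0" using d2 by simp
    have "Ln (of_real (real d ^ k) * u) = of_real (ln (real d ^ k)) + Ln u"
      using Ln_times_of_real[OF dk u0] Ln_of_real[OF dk] by metis
    also have "ln (real d ^ k) = (real k * ln lam) * \<rho>" using lnd_eq d2 by (simp add: ln_realpow)
    finally have "Ln (of_real (real d ^ k) * u) / complex_of_real \<rho> = of_real (real k * ln lam) + Ln u / complex_of_real \<rho>"
      using rho0 by (simp add: field_simps)
    hence "exp (Ln (of_real (real d ^ k) * u) / complex_of_real \<rho>) = of_real (lam^k) * exp (Ln u / complex_of_real \<rho>)"
    proof -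
      have "exp (complex_of_real (ln (lam^k))) = of_real (exp (ln (lam^k)))" by (simp only: of_real_exp)
      also have "\<dots> = of_real (lam^k)" using lam by simp
      finally have ek: "exp (complex_of_real (real k * ln lam)) = of_real (lam^k)" using lam by (simp add: ln_realpow)
      show ?thesis unfolding \<open>Ln (of_real (real d ^ k) * u) / complex_of_real \<rho> = _\<close> exp_add ek ..
    qed
    thus ?thesis unfolding Q_def using PhiIter by simp
  qed
  define q where "q = map_poly complex_of_real p"
  have degq: "degree q = d" unfolding q_def using deg by (simp add: degree_map_poly)
  have pcq: "pc = poly q" unfolding pc_def q_def ..
  obtain R0 \<eta>0 where R0: "R0 \<ge> 1" and eta0: "\<eta>0 > 0"
    and EXP: "\<And>b \<eta>. R0 \<le> norm b \<Longrightarrow> norm \<eta> \<le> \<eta>0 \<Longrightarrow>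
        norm \<eta> * norm (pc b) \<le> norm (pc (b*(1+\<eta>)) - pc b)"
    and ESC: "\<And>b. R0 \<le> norm b \<Longrightarrow> 2 * norm b \<le> norm (pc b)"
    using expansion[of q] degq d2 unfolding pcq by metis
  obtain y0 where y0: "y0 > 0" "\<Phi> (of_real y0) \<in> angular_region \<beta>"
  proof -
    have "\<Phi> field_differentiable (at 0)"
      using Phi_entire holomorphic_on_imp_differentiable_at by blast
    hence "(\<Phi> has_field_derivative 1) (at 0)"
      using Phi_deriv by (metis DERIV_deriv_iff_field_differentiable)
    hence lim1: "((\<lambda>y. \<Phi> y / y) \<longlongrightarrow> 1) (at 0)"
      using Phi0 by (simp add: has_field_derivative_iff)
    have "isCont Ln 1" by (rule continuous_at_Ln) (auto simp: complex_nonpos_Reals_iff)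
    hence lim2: "((\<lambda>y. Ln (\<Phi> y / y)) \<longlongrightarrow> 0) (at 0)"
      using isCont_tendsto_compose[OF _ lim1, of Ln] by simp
    have ev: "eventually (\<lambda>y. dist (\<Phi> y / y) 1 < 1/2 \<and> dist (Ln (\<Phi> y / y)) 0 < \<beta>) (at 0)"
      using tendstoD[OF lim1, of "1/2"] tendstoD[OF lim2, of \<beta>] beta by (auto intro: eventually_conj)
    then obtain r where r: "r > 0" "\<And>y. y \<noteq> 0 \<Longrightarrow> dist y 0 < r \<Longrightarrow>
        dist (\<Phi> y / y) 1 < 1/2 \<and> dist (Ln (\<Phi> y / y)) 0 < \<beta>"
      unfolding eventually_at by auto
    define w where "w = \<Phi> (of_real (r/2)) / of_real (r/2)"
    have w: "dist w 1 < 1/2" "dist (Ln w) 0 < \<beta>" using r(2)[of "of_real (r/2)"] r(1) unfolding w_def by auto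
    have w0: "w \<noteq> 0" using w(1) by (auto simp: dist_norm)
    have "\<bar>Arg w\<bar> < \<beta>" using w(2) w0 by (simp add: Arg_eq_Im_Ln dist_norm) (metis abs_Im_le_cmod le_less_trans)
    moreover have eqv: "\<Phi> (of_real (r/2)) = w * of_real (r/2)" unfolding w_def using r(1) by simp
    moreover have "Arg (w * of_real (r/2)) = Arg w" using r(1) by (intro Arg_times_of_real2) simp
    moreover have "w * of_real (r/2) \<noteq> 0" using w0 r(1) by simp
    ultimately have "\<Phi> (of_real (r/2)) \<in> angular_region \<beta>"
      unfolding angular_region_def by (simp only: mem_Collect_eq) auto
    thus ?thesis using that[of "r/2"] r(1) by simp
  qed
  have esc_orbit: "\<forall>B. eventually (\<lambda>n. B \<le> norm ((pc^^n) (\<Phi> (of_real y0)))) sequentially"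
    by (rule fatou_escape[OF ESC R0]) (use y0 fatou in auto)
  have Rec: "Re c > 0"
  proof (rule ccontr)
    assume nc: "\<not> Re c > 0"
    obtain N where N: "R / y0 < lam ^ N" using real_arch_pow[OF lam] by blast
    have ev2: "eventually (\<lambda>n. R \<le> lam^n * y0) sequentially"
      unfolding eventually_sequentially
    proof (intro exI allI impI)
      fix n assume "N \<le> n"
      hence "lam^N \<le> lam^n" using lam by (intro power_increasing) auto
      hence "y0 * lam^N \<le> y0 * lam^n" using y0 by (intro mult_left_mono) auto
      moreover have "R < y0 * lam^N" using N y0 by (simp add: field_simps)
      ultimately show "R \<le> lam^n * y0" by (simp add: mult.commute)
    qed
    from eventually_conj[OF ev2 esc_orbit[rule_format, of "norm A * exp 1 + 1"]]
    obtain n where n: "R \<le> lam^n * y0" "norm A * exp 1 + 1 \<le> norm ((pc^^n) (\<Phi> (of_real y0)))"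
      unfolding eventually_sequentially by auto
    define t where "t = lam^n * y0"
    have t: "t > 0" "R \<le> t" unfolding t_def using n y0 lam by auto
    have "(pc^^n) (\<Phi> (of_real y0)) = \<Phi> (of_real t)" unfolding t_def using PhiIter[of n "of_real y0"] by simp
    moreover have "norm (\<Phi> (of_real t)) \<le> norm A * exp 1"
    proof -
      have z: "complex_of_real t \<noteq> 0" "\<bar>Arg (complex_of_real t)\<bar> \<le> \<beta>'" "R \<le> norm (complex_of_real t)"
        using t b'0 by auto
      from AZ[OF z] have P: "\<Phi> (of_real t) = A * exp (of_real (t powr \<rho>) * c + e (of_real t))"
        and en: "norm (e (of_real t)) \<le> 1 / t"
        using t powr_of_real[of t \<rho>] by auto
      have "Re (of_real (t powr \<rho>) * c) \<le> 0" using nc by (simp add: mult_nonneg_nonpos)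
      moreover have "Re (e (of_real t)) \<le> 1"
        using en t R1 abs_Re_le_cmod[of "e (of_real t)"] by (smt (verit) divide_le_eq_1)
      ultimately have "exp (Re (of_real (t powr \<rho>) * c + e (of_real t))) \<le> exp 1" by simp
      thus ?thesis unfolding P by (simp add: norm_mult norm_exp_eq_Re mult_left_mono)
    qed
    ultimately show False using n(2) by simp
  qed
  have c0: "c \<noteq> 0" using Rec by auto
  define T where "T = 2 * of_real pi * \<i> / c"
  have cT: "c * T = 2 * of_real pi * \<i>" using c0 unfolding T_def by simp
  have ImT: "Im T > 0"
  proof -
    have "Im T = 2 * pi * Re c / (Re c ^ 2 + Im c ^ 2)" unfolding T_def by (simp add: Im_divide power2_eq_square)
    moreover have "Re c ^ 2 + Im c ^ 2 > 0" using Rec by (simp add: add_pos_nonneg)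
    ultimately show ?thesis using Rec by simp
  qed
  have T0: "norm T > 0" using ImT by auto
  define D where "D = {u. inner (\<i> * T) u < (0::real)}"
  have innerD: "inner (\<i> * T) u = Im (u * cnj T)" for u
    by (simp add: inner_complex_def algebra_simps)
  have memD: "u \<in> D \<longleftrightarrow> Im (u * cnj T) < 0" for u unfolding D_def innerD by simp
  have D_open: "open D" unfolding D_def by (rule open_halfspace_lt)
  have D_conn: "connected D" unfolding D_def by (rule convex_connected[OF convex_halfspace_lt])
  have D_slit: "D \<inter> \<real>\<^sub>\<le>\<^sub>0 = {}"
  proof (rule ccontr)
    assume "D \<inter> \<real>\<^sub>\<le>\<^sub>0 \<noteq> {}"
    then obtain u where u: "u \<in> D" "u \<in> \<real>\<^sub>\<le>\<^sub>0" by blast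
    from u(2) have "Re u \<le> 0" "Im u = 0" by (auto simp: complex_nonpos_Reals_iff)
    hence "Im (u * cnj T) \<ge> 0" using ImT by (simp add: mult_nonpos_nonneg)
    thus False using u(1) memD by simp
  qed
  have D_T: "u + T \<in> D" "u - T \<in> D" if "u \<in> D" for u
    using that unfolding memD by (simp_all add: algebra_simps)
  have D_ne0: "u \<noteq> 0" if "u \<in> D" for u using that memD by auto
  have Qhol: "Q holomorphic_on D"
  proof -
    have "(\<lambda>u. exp (Ln u / complex_of_real \<rho>)) holomorphic_on D"
      using D_slit by (intro holomorphic_intros) auto
    moreover have "\<Phi> holomorphic_on ((\<lambda>u. exp (Ln u / complex_of_real \<rho>)) ` D)"
      by (rule holomorphic_on_subset[OF Phi_entire]) simp
    ultimately show ?thesis unfolding Q_def using holomorphic_on_compose[of _ D \<Phi>] by (simp add: comp_def)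
  qed
  have QThol: "(\<lambda>u. Q (u + T)) holomorphic_on D"
  proof -
    have "(\<lambda>u. u + T) holomorphic_on D" by (intro holomorphic_intros)
    moreover have "Q holomorphic_on ((\<lambda>u. u + T) ` D)" by (rule holomorphic_on_subset[OF Qhol]) (auto intro: D_T)
    ultimately show ?thesis using holomorphic_on_compose[of _ D Q] by (simp add: comp_def)
  qed
  obtain \<delta>0 where d0: "\<delta>0 > 0" "\<delta>0 \<le> 1" and d0P: "\<And>w. norm (w - 1) < \<delta>0 \<Longrightarrow> \<bar>Im (Ln w)\<bar> < \<rho> * \<beta>'"
  proof -
    have "isCont Ln 1" by (rule continuous_at_Ln) (auto simp: complex_nonpos_Reals_iff)
    hence "(Ln \<longlongrightarrow> 0) (at 1)" by (simp add: isCont_def)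
    hence "eventually (\<lambda>w. dist (Ln w) 0 < \<rho> * \<beta>') (at 1)"
      using rho0 b'0 by (intro tendstoD) auto
    then obtain r where r: "r > 0" "\<And>w. w \<noteq> 1 \<Longrightarrow> dist w 1 < r \<Longrightarrow> dist (Ln w) 0 < \<rho> * \<beta>'"
      unfolding eventually_at by auto
    show ?thesis
    proof (rule that[of "min r 1"])
      fix w :: complex assume "norm (w - 1) < min r 1"
      thus "\<bar>Im (Ln w)\<bar> < \<rho> * \<beta>'"
      proof (cases "w = 1")
        case True then show ?thesis using rho0 b'0 by simp
      next
        case False
        hence "dist (Ln w) 0 < \<rho> * \<beta>'" using r \<open>norm (w - 1) < min r 1\<close> by (simp add: dist_norm)
        thus ?thesis using abs_Im_le_cmod[of "Ln w"] by (simp add: dist_norm)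
      qed
    qed (use r in auto)
  qed
  have ArgSmall: "v \<noteq> 0 \<and> \<bar>Arg v\<bar> \<le> \<rho> * \<beta>'" if v: "Y > 0" "norm (v / of_real Y - 1) < \<delta>0" for v Y
  proof -
    define w where "w = v / of_real Y"
    have w1: "norm (w - 1) < 1" using v d0 unfolding w_def by simp
    have w0: "w \<noteq> 0" using w1 by auto
    have vw: "v = of_real Y * w" unfolding w_def using v by simp
    have "\<bar>Arg w\<bar> \<le> \<rho> * \<beta>'" using d0P[of w] v w0 unfolding w_def by (simp add: Arg_eq_Im_Ln)
    moreover have "Arg v = Arg w" unfolding vw using v by simp
    ultimately show ?thesis using vw w0 v by simp
  qed
  have A0n: "norm A > 0" using A0 by simp
  define X where "X = max (max (2*(1+norm T)/\<delta>0) (R + norm T + 2))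
                        (max ((2 + R0/norm A + norm c)/Re c + 1) (max (norm T/Im T + 2) (6/\<eta>0 + norm T + 3)))"
  have X: "X \<ge> 2*(1+norm T)/\<delta>0" "X \<ge> R + norm T + 2" "X \<ge> (2 + R0/norm A + norm c)/Re c + 1"
          "X \<ge> norm T/Im T + 2" "X \<ge> 6/\<eta>0 + norm T + 3"
    unfolding X_def by auto
  have Xpos: "X > 0" using X(2) R1 norm_ge_zero[of T] by linarith
  define m where "m = X - 1 - norm T"
  have m: "m \<ge> 6/\<eta>0" "m \<ge> 2" "m \<ge> R" "m > 0" using X(5) X(2) R1 eta0 unfolding m_def
    by (auto simp: divide_nonneg_nonneg)
  have dkpos: "real d ^ k \<ge> 1" for k using d2 by simp
  have exp2pi: "exp (of_nat N * (2 * of_real pi * \<i>)) = 1" for N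
    by (subst exp_of_nat_mult) simp
  have exact: "Q (u + T) = Q u" if uX: "u \<in> ball (of_real X) 1" for u
  proof -
    have du: "norm (u - of_real X) < 1" using uX by (simp add: dist_norm norm_minus_commute)
    have ReIm: "\<bar>Re u - X\<bar> < 1" "\<bar>Im u\<bar> < 1"
      using du abs_Re_le_cmod[of "u - of_real X"] abs_Im_le_cmod[of "u - of_real X"] by auto
    have nu: "norm u \<ge> m"
    proof -
      have "X \<le> norm u + norm (u - of_real X)" using norm_triangle_sub[of "of_real X" u] Xpos
        by (simp add: norm_minus_commute)
      thus ?thesis unfolding m_def using du T0 by linarith
    qed
    have nuT: "norm (u + T) \<ge> m"
    proof -
      have "norm u \<le> norm (u + T) + norm T" using norm_triangle_sub[of u "u + T"] by (simp add: norm_minus_commute)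
      moreover have "norm u \<ge> X - 1"
        using norm_triangle_sub[of "of_real X" u] Xpos du by (simp add: norm_minus_commute)
      ultimately show ?thesis unfolding m_def by linarith
    qed
    have argu: "u \<noteq> 0 \<and> \<bar>Arg u\<bar> \<le> \<rho> * \<beta>'"
    proof (rule ArgSmall[OF Xpos])
      have "norm (u / of_real X - 1) = norm (u - of_real X) / X" using Xpos
        by (simp add: divide_simps norm_divide; simp add: field_simps)
      also have "\<dots> < 1 / X" using du Xpos by (simp add: divide_strict_right_mono)
      also have "\<dots> \<le> \<delta>0"
        using X(1) Xpos d0 T0 by (simp add: field_simps) (use norm_ge_zero[of T] in linarith)
      finally show "norm (u / of_real X - 1) < \<delta>0" .
    qed
    have arguT: "u + T \<noteq> 0 \<and> \<bar>Arg (u + T)\<bar> \<le> \<rho> * \<beta>'"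
    proof (rule ArgSmall[OF Xpos])
      have "norm ((u + T) / of_real X - 1) = norm ((u - of_real X) + T) / X" using Xpos
        by (simp add: divide_simps norm_divide; simp add: field_simps)
      also have "\<dots> \<le> (norm (u - of_real X) + norm T) / X"
        using Xpos by (intro divide_right_mono norm_triangle_ineq) auto
      also have "\<dots> < (1 + norm T) / X" using du Xpos by (simp add: divide_strict_right_mono)
      also have "\<dots> \<le> \<delta>0"
        using X(1) Xpos d0 T0 by (simp add: field_simps) (use norm_ge_zero[of T] in linarith)
      finally show "norm ((u + T) / of_real X - 1) < \<delta>0" .
    qed
    have Recu: "Re (c * u) \<ge> 2 + R0 / norm A"
    proof -
      have "Re (c * u) = Re c * Re u - Im c * Im u" by simp
      moreover have "Im c * Im u \<le> norm c"
      proof -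
        have "\<bar>Im c\<bar> * \<bar>Im u\<bar> \<le> \<bar>Im c\<bar> * 1" using ReIm(2) by (intro mult_left_mono) auto
        hence "\<bar>Im c * Im u\<bar> \<le> \<bar>Im c\<bar>" by (simp add: abs_mult)
        thus ?thesis using abs_Im_le_cmod[of c] by linarith
      qed
      moreover have "Re c * Re u \<ge> Re c * (X - 1)" using ReIm(1) Rec by (intro mult_left_mono) auto
      moreover have "Re c * (X - 1) \<ge> 2 + R0/norm A + norm c"
        using X(3) Rec by (simp add: field_simps)
      ultimately show ?thesis by linarith
    qed
    define a where "a = (\<lambda>k. (pc^^k) (Q u))"
    define b where "b = (\<lambda>k. (pc^^k) (Q (u + T)))"
    have rep: "\<exists>\<epsilon>1 \<epsilon>2. a k = A * exp (c * (of_real (real d ^ k) * u) + \<epsilon>1) \<and>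
                  b k = A * exp (c * (of_real (real d ^ k) * u) + \<epsilon>2) \<and>
                  norm \<epsilon>1 \<le> 1 / (real d ^ k * m) \<and> norm \<epsilon>2 \<le> 1 / (real d ^ k * m)" for k
    proof -
      have dk: "real d ^ k > 0" using dkpos[of k] by linarith
      have P1: "of_real (real d ^ k) * u \<noteq> 0" "\<bar>Arg (of_real (real d ^ k) * u)\<bar> \<le> \<rho> * \<beta>'"
               "R \<le> norm (of_real (real d ^ k) * u)"
      proof -
        show "of_real (real d ^ k) * u \<noteq> 0" using argu dk by simp
        show "\<bar>Arg (of_real (real d ^ k) * u)\<bar> \<le> \<rho> * \<beta>'" using argu Arg_times_of_real[OF dk, of u] by simp
        have "norm u \<le> real d ^ k * norm u" using dkpos[of k] by (simp add: mult_le_cancel_right1)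
        thus "R \<le> norm (of_real (real d ^ k) * u)" using nu m by (simp add: norm_mult norm_power)
      qed
      have P2: "of_real (real d ^ k) * (u + T) \<noteq> 0" "\<bar>Arg (of_real (real d ^ k) * (u + T))\<bar> \<le> \<rho> * \<beta>'"
               "R \<le> norm (of_real (real d ^ k) * (u + T))"
      proof -
        show "of_real (real d ^ k) * (u + T) \<noteq> 0" using arguT dk by simp
        show "\<bar>Arg (of_real (real d ^ k) * (u + T))\<bar> \<le> \<rho> * \<beta>'" using arguT Arg_times_of_real[OF dk, of "u + T"] by simp
        have "norm (u + T) \<le> real d ^ k * norm (u + T)" using dkpos[of k] by (simp add: mult_le_cancel_right1)
        thus "R \<le> norm (of_real (real d ^ k) * (u + T))" using nuT m by (simp add: norm_mult norm_power)
      qed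
      obtain \<epsilon>1 where e1: "Q (of_real (real d ^ k) * u) = A * exp (c * (of_real (real d ^ k) * u) + \<epsilon>1)"
        "norm \<epsilon>1 \<le> 1 / norm (of_real (real d ^ k) * u)" using AS[OF P1] by blast
      obtain \<epsilon>2 where e2: "Q (of_real (real d ^ k) * (u + T)) = A * exp (c * (of_real (real d ^ k) * (u + T)) + \<epsilon>2)"
        "norm \<epsilon>2 \<le> 1 / norm (of_real (real d ^ k) * (u + T))" using AS[OF P2] by blast
      have "a k = A * exp (c * (of_real (real d ^ k) * u) + \<epsilon>1)"
        unfolding a_def using QIter[of u k] argu e1 by simp
      moreover have "b k = A * exp (c * (of_real (real d ^ k) * u) + \<epsilon>2)"
      proof -
        have "b k = A * exp (c * (of_real (real d ^ k) * (u + T)) + \<epsilon>2)"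
          unfolding b_def using QIter[of "u + T" k] arguT e2 by simp
        also have "c * (of_real (real d ^ k) * (u + T)) + \<epsilon>2 = (c * (of_real (real d ^ k) * u) + \<epsilon>2) + of_nat (d ^ k) * (2 * of_real pi * \<i>)"
          using cT by (simp add: algebra_simps)
        also have "exp \<dots> = exp (c * (of_real (real d ^ k) * u) + \<epsilon>2)" by (simp only: exp_add exp2pi mult_1_right)
        finally show ?thesis .
      qed
      moreover have "norm \<epsilon>1 \<le> 1 / (real d ^ k * m)"
      proof -
        have "real d ^ k * m \<le> norm (of_real (real d ^ k) * u)" using nu dk by (simp add: norm_mult norm_power)
        moreover have "0 < real d ^ k * m" using dk m by simp
        ultimately have "1 / norm (of_real (real d ^ k) * u) \<le> 1 / (real d ^ k * m)" by (intro frac_le) auto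
        thus ?thesis using e1(2) by linarith
      qed
      moreover have "norm \<epsilon>2 \<le> 1 / (real d ^ k * m)"
      proof -
        have "real d ^ k * m \<le> norm (of_real (real d ^ k) * (u + T))" using nuT dk by (simp add: norm_mult norm_power)
        moreover have "0 < real d ^ k * m" using dk m by simp
        ultimately have "1 / norm (of_real (real d ^ k) * (u + T)) \<le> 1 / (real d ^ k * m)" by (intro frac_le) auto
        thus ?thesis using e2(2) by linarith
      qed
      ultimately show ?thesis by blast
    qed
    define \<eta> where "\<eta> = (\<lambda>k. a k / b k - 1)"
    have bnd: "norm (b k) \<ge> R0 \<and> norm (\<eta> k) \<le> 6 / (real d ^ k * m)" for k
    proof -
      obtain \<epsilon>1 \<epsilon>2 where E: "a k = A * exp (c * (of_real (real d ^ k) * u) + \<epsilon>1)"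
          "b k = A * exp (c * (of_real (real d ^ k) * u) + \<epsilon>2)"
          "norm \<epsilon>1 \<le> 1 / (real d ^ k * m)" "norm \<epsilon>2 \<le> 1 / (real d ^ k * m)"
        using rep[of k] by blast
      have dk: "real d ^ k \<ge> 1" by (rule dkpos)
      have small: "1 / (real d ^ k * m) \<le> 1 / m" using dk m by (intro frac_le) (auto simp: mult_le_cancel_right1)
      have "Re (c * (of_real (real d ^ k) * u)) = real d ^ k * Re (c * u)" by (simp add: algebra_simps)
      also have "\<dots> \<ge> Re (c * u)"
      proof -
        have "0 \<le> R0 / norm A" using R0 A0n by simp
        hence "0 \<le> Re (c * u)" using Recu by linarith
        thus ?thesis using mult_right_mono[OF dk, of "Re (c * u)"] by simp
      qed
      finally have re1: "Re (c * (of_real (real d ^ k) * u)) \<ge> Re (c * u)" .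
      have "1 / m \<le> 1" using m by simp
      hence "Re \<epsilon>2 \<ge> - 1"
        using E(4) small abs_Re_le_cmod[of \<epsilon>2] by linarith
      hence "Re (c * (of_real (real d ^ k) * u) + \<epsilon>2) \<ge> 1 + R0 / norm A" using re1 Recu by simp
      hence "exp (Re (c * (of_real (real d ^ k) * u) + \<epsilon>2)) \<ge> 1 + R0 / norm A"
        using exp_ge_add_one_self[of "Re (c * (of_real (real d ^ k) * u) + \<epsilon>2)"] by linarith
      hence "norm A * exp (Re (c * (of_real (real d ^ k) * u) + \<epsilon>2)) \<ge> norm A * (1 + R0 / norm A)"
        using A0n by (intro mult_left_mono) auto
      moreover have "norm A * (1 + R0 / norm A) \<ge> R0" using A0n by (simp add: field_simps)
      ultimately have b1: "norm (b k) \<ge> R0" unfolding E(2) by (simp add: norm_mult norm_exp_eq_Re)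
      have "\<eta> k = exp (\<epsilon>1 - \<epsilon>2) - 1" unfolding \<eta>_def E(1) E(2) using A0 by (simp add: exp_diff[symmetric] algebra_simps exp_add)
      moreover have "norm (\<epsilon>1 - \<epsilon>2) \<le> 2 / (real d ^ k * m)"
        using norm_triangle_ineq4[of \<epsilon>1 \<epsilon>2] E(3) E(4) by simp
      moreover have "2 / (real d ^ k * m) \<le> 1"
      proof -
        have "2 / (real d ^ k * m) \<le> 2 / m" using dk m by (intro frac_le) (auto simp: mult_le_cancel_right1)
        also have "\<dots> \<le> 1" using m by simp
        finally show ?thesis .
      qed
      ultimately have "norm (\<eta> k) \<le> 3 * (2 / (real d ^ k * m))"
      proof -
        assume h: "\<eta> k = exp (\<epsilon>1 - \<epsilon>2) - 1" "norm (\<epsilon>1 - \<epsilon>2) \<le> 2 / (real d ^ k * m)"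
          "2 / (real d ^ k * m) \<le> 1"
        have "norm (exp (\<epsilon>1 - \<epsilon>2) - 1) \<le> 3 * norm (\<epsilon>1 - \<epsilon>2)"
          using h(2,3) by (intro exp_minus_one_bound) linarith
        thus ?thesis unfolding h(1) using h(2) by linarith
      qed
      thus ?thesis using b1 by simp
    qed
    have eta_small: "norm (\<eta> k) \<le> \<eta>0" for k
    proof -
      have "6 / (real d ^ k * m) \<le> 6 / m" using dkpos[of k] m by (intro frac_le) (auto simp: mult_le_cancel_right1)
      also have "6 / m \<le> \<eta>0" using m eta0 by (simp add: field_simps)
      finally show ?thesis using bnd[of k] by linarith
    qed
    have bne: "b k \<noteq> 0" for k using bnd[of k] R0 by auto
    have mono: "norm (\<eta> k) \<le> norm (\<eta> (Suc k))" for k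
    proof -
      have ak: "a k = b k * (1 + \<eta> k)" unfolding \<eta>_def using bne[of k] by (simp add: field_simps)
      have aS: "a (Suc k) = pc (a k)" "b (Suc k) = pc (b k)" unfolding a_def b_def by simp_all
      have pcb: "pc (b k) \<noteq> 0" using ESC[of "b k"] bnd[of k] R0 by auto
      have "norm (\<eta> k) * norm (pc (b k)) \<le> norm (pc (b k * (1 + \<eta> k)) - pc (b k))"
        using EXP[of "b k" "\<eta> k"] bnd[of k] eta_small[of k] by simp
      also have "pc (b k * (1 + \<eta> k)) - pc (b k) = \<eta> (Suc k) * pc (b k)"
        unfolding \<eta>_def aS ak[symmetric] using pcb bne[of k] by (simp add: field_simps)
      finally have "norm (\<eta> k) * norm (pc (b k)) \<le> norm (\<eta> (Suc k)) * norm (pc (b k))" by (simp add: norm_mult norm_power)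
      thus ?thesis using pcb by simp
    qed
    have mono0: "norm (\<eta> 0) \<le> norm (\<eta> k)" for k
    proof (induction k)
      case (Suc k) then show ?case using mono[of k] by linarith
    qed simp
    have "\<eta> 0 = 0"
    proof (rule ccontr)
      assume ne: "\<eta> 0 \<noteq> 0"
      obtain k where k: "6 / (m * norm (\<eta> 0)) < 2 ^ k" using real_arch_pow[of 2] by fastforce
      have "(2::real) ^ k \<le> real d ^ k" using d2 by (intro power_mono) auto
      hence "6 / (m * norm (\<eta> 0)) < real d ^ k" using k by linarith
      hence "6 < real d ^ k * (m * norm (\<eta> 0))" using ne m by (simp add: field_simps)
      moreover have pos: "0 < real d ^ k * m" using m dkpos[of k] d2 by (intro mult_pos_pos) auto
      ultimately have "6 < norm (\<eta> 0) * (real d ^ k * m)" by (simp add: mult_ac)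
      hence "6 / (real d ^ k * m) < norm (\<eta> 0)" using pos_divide_less_eq[OF pos] by simp
      thus False using bnd[of k] mono0[of k] by linarith
    qed
    thus ?thesis unfolding \<eta>_def a_def b_def using bne[of 0] unfolding b_def by simp
  qed
  have D_shift: "u + of_real t * T \<in> D" if "u \<in> D" for u t
  proof -
    have "Im ((u + of_real t * T) * cnj T) = Im (u * cnj T)" by (simp add: algebra_simps)
    thus ?thesis using that memD by simp
  qed
  have ballD: "ball (of_real X) 1 \<subseteq> D"
  proof
    fix u :: complex assume "u \<in> ball (of_real X) 1"
    hence du: "norm (u - of_real X) < 1" by (simp add: dist_norm norm_minus_commute)
    have ReIm: "\<bar>Re u - X\<bar> < 1" "\<bar>Im u\<bar> < 1"
      using du abs_Re_le_cmod[of "u - of_real X"] abs_Im_le_cmod[of "u - of_real X"] by auto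
    have "Im u * Re T \<le> norm T"
    proof -
      have "\<bar>Im u\<bar> * \<bar>Re T\<bar> \<le> 1 * \<bar>Re T\<bar>" using ReIm(2) by (intro mult_right_mono) auto
      hence "\<bar>Im u * Re T\<bar> \<le> \<bar>Re T\<bar>" by (simp add: abs_mult)
      thus ?thesis using abs_Re_le_cmod[of T] by linarith
    qed
    moreover have "Re u * Im T \<ge> (X - 1) * Im T" using ReIm(1) ImT by (intro mult_right_mono) auto
    moreover have "(X - 1) * Im T \<ge> norm T + Im T"
    proof -
      have "X - 1 \<ge> norm T / Im T + 1" using X(4) by linarith
      hence "(X - 1) * Im T \<ge> (norm T / Im T + 1) * Im T" using ImT by (intro mult_right_mono) auto
      moreover have "(norm T / Im T + 1) * Im T = norm T + Im T" using ImT by (simp add: field_simps)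
      ultimately show ?thesis by linarith
    qed
    moreover have "Im (u * cnj T) = Im u * Re T - Re u * Im T" by simp
    ultimately have "Im (u * cnj T) < 0" using ImT by linarith
    thus "u \<in> D" using memD by simp
  qed
  have perD: "Q (u + T) = Q u" if "u \<in> D" for u
    by (rule analytic_continuation_open[of "ball (of_real X) 1" D "\<lambda>u. Q (u + T)" Q])
       (use D_open D_conn ballD QThol Qhol exact that in auto)
  have perN: "Q (u + of_nat n * T) = Q u \<and> Q (u - of_nat n * T) = Q u" if "u \<in> D" for u n
  proof (induction n)
    case 0 then show ?case by simp
  next
    case (Suc n)
    have D1: "u + of_nat n * T \<in> D" using D_shift[OF that, of "real n"] by simp
    have D2: "u - of_nat (Suc n) * T \<in> D" using D_shift[OF that, of "- real (Suc n)"] by (simp add: algebra_simps)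
    have "Q (u + of_nat (Suc n) * T) = Q ((u + of_nat n * T) + T)" by (simp add: algebra_simps)
    also have "\<dots> = Q (u + of_nat n * T)" by (rule perD[OF D1])
    finally have 1: "Q (u + of_nat (Suc n) * T) = Q u" using Suc by simp
    have "Q (u - of_nat n * T) = Q ((u - of_nat (Suc n) * T) + T)" by (simp add: algebra_simps)
    also have "\<dots> = Q (u - of_nat (Suc n) * T)" by (rule perD[OF D2])
    finally have 2: "Q (u - of_nat (Suc n) * T) = Q u" using Suc by simp
    show ?case using 1 2 by simp
  qed
  have perI: "Q (u + of_int k * T) = Q u" if "u \<in> D" for u k
  proof (cases "k \<ge> 0")
    case True
    then obtain n where "k = int n" by (metis nonneg_eq_int)
    thus ?thesis using perN[OF that, of n] by simp
  next
    case False
    then obtain n where "k = - int n" by (metis neg_int_cases[of k] less_le not_le)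
    thus ?thesis using perN[OF that, of n] by (simp add: algebra_simps)
  qed
  define V0 where "V0 = max (2 * norm T / \<delta>0 + 1) (R + norm T + 1)"
  have GG: "\<exists>\<epsilon>. Q u = A * exp (c * u + \<epsilon>) \<and> norm \<epsilon> \<le> 1 / (V - norm T)"
    if uD: "u \<in> D" and V: "V = - Im (u * cnj T) / Im T" "V \<ge> V0" for u V
  proof -
    have V1: "V \<ge> 2 * norm T / \<delta>0 + 1" "V \<ge> R + norm T + 1" using V unfolding V0_def by auto
    have Vpos: "V > 0" using V1(2) R1 norm_ge_zero[of T] by linarith
    define t where "t = Im u / Im T"
    define k where "k = \<lfloor>t\<rfloor>"
    define u' where "u' = u - of_int k * T"
    have uv: "u - of_real t * T = of_real V"
    proof (rule complex_eqI)
      show "Im (u - of_real t * T) = Im (of_real V)" unfolding t_def using ImT by simp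
      show "Re (u - of_real t * T) = Re (of_real V)" unfolding t_def V(1) using ImT
        by (simp add: field_simps)
    qed
    have u'eq: "u' - of_real V = of_real (t - of_int k) * T" unfolding u'_def uv[symmetric] by (simp add: algebra_simps)
    have tk: "0 \<le> t - of_int k" "t - of_int k < 1" unfolding k_def by linarith+
    have du': "norm (u' - of_real V) \<le> norm T"
    proof -
      have "norm (u' - of_real V) = \<bar>t - of_int k\<bar> * norm T" unfolding u'eq by (simp only: norm_mult norm_of_real)
      also have "\<dots> \<le> 1 * norm T" using tk by (intro mult_right_mono) auto
      finally show ?thesis by simp
    qed
    have u'D: "u' \<in> D" unfolding u'_def using D_shift[OF uD, of "- of_int k"] by simp
    have argu': "u' \<noteq> 0 \<and> \<bar>Arg u'\<bar> \<le> \<rho> * \<beta>'"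
    proof (rule ArgSmall[OF Vpos])
      have "norm (u' / of_real V - 1) = norm (u' - of_real V) / V" using Vpos
        by (simp add: divide_simps norm_divide; simp add: field_simps)
      also have "\<dots> \<le> norm T / V" using du' Vpos by (simp add: divide_right_mono)
      also have "\<dots> < \<delta>0"
      proof -
        have "2 * norm T / \<delta>0 < V" using V1(1) by linarith
        hence "2 * norm T < V * \<delta>0" using d0 by (simp add: field_simps)
        thus ?thesis using Vpos d0 by (simp add: field_simps) (use norm_ge_zero[of T] in linarith)
      qed
      finally show "norm (u' / of_real V - 1) < \<delta>0" .
    qed
    have nu': "norm u' \<ge> V - norm T"
      using norm_triangle_sub[of "of_real V" u'] du' Vpos by (simp add: norm_minus_commute)
    have Ru': "R \<le> norm u'" using nu' V1(2) by linarith
    obtain \<epsilon> where E: "Q u' = A * exp (c * u' + \<epsilon>)" "norm \<epsilon> \<le> 1 / norm u'"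
      using AS[of u'] argu' Ru' by blast
    have "1 / norm u' \<le> 1 / (V - norm T)"
      using nu' V1(2) R1 by (intro frac_le) auto
    hence en: "norm \<epsilon> \<le> 1 / (V - norm T)" using E(2) by linarith
    have "Q u = Q (u' + of_int k * T)" unfolding u'_def by simp
    also have "\<dots> = Q u'" by (rule perI[OF u'D])
    also have "\<dots> = A * exp (c * u + \<epsilon>)"
    proof -
      have "c * u + \<epsilon> = (c * u' + \<epsilon>) + (2 * of_int k * of_real pi) * \<i>"
        unfolding u'_def using cT by (simp add: algebra_simps)
      hence "exp (c * u + \<epsilon>) = exp (c * u' + \<epsilon>) * exp ((2 * of_int k * of_real pi) * \<i>)"
        by (simp add: exp_add)
      also have "exp ((2 * of_int k * of_real pi) * \<i>) = 1"
        using exp_integer_2pi[of "of_int k"] by simp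
      finally show ?thesis using E(1) by simp
    qed
    finally show ?thesis using en by blast
  qed
  define \<phi> where "\<phi> = Arg T"
  have phi: "0 < \<phi>" "\<phi> < pi" using Arg_lt_pi[of T] ImT unfolding \<phi>_def by auto
  define g where "g = pi - 2 * pi * \<rho>"
  have g: "0 < g" "g \<le> pi" unfolding g_def using rho rho0 by (auto simp: field_simps)
  define \<theta>1 where "\<theta>1 = \<phi> - g/2"
  define \<theta>2 where "\<theta>2 = \<phi> - pi + g/2"
  have th: "-pi < \<theta>1" "\<theta>1 \<le> pi" "-pi < \<theta>2" "\<theta>2 \<le> pi"
    unfolding \<theta>1_def \<theta>2_def using phi g by auto
  have th12: "\<theta>1 - \<theta>2 = 2 * pi * \<rho>" unfolding \<theta>1_def \<theta>2_def g_def by simp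
  define e1 where "e1 = cis \<theta>1"
  define e2 where "e2 = cis \<theta>2"
  define \<sigma> where "\<sigma> = norm T * sin (g/2)"
  have sg: "sin (g/2) > 0" using g by (intro sin_gt_zero) auto
  have sigma: "\<sigma> > 0" unfolding \<sigma>_def using sg T0 by simp
  have Tpolar: "T = of_real (norm T) * cis \<phi>" unfolding \<phi>_def using rcis_cmod_Arg[of T] by (simp add: rcis_def)
  have Imcis: "Im (cis \<theta> * cnj T) = norm T * sin (\<theta> - \<phi>)" for \<theta>
    by (subst Tpolar) (simp add: sin_diff algebra_simps)
  have Ime: "Im (e1 * cnj T) = - \<sigma>" "Im (e2 * cnj T) = - \<sigma>"
  proof -
    show "Im (e1 * cnj T) = - \<sigma>" unfolding e1_def Imcis \<sigma>_def \<theta>1_def by simp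
    have "sin (\<phi> - pi + g/2 - \<phi>) = - sin (g/2)" by (simp add: sin_diff)
    thus "Im (e2 * cnj T) = - \<sigma>" unfolding e2_def Imcis \<sigma>_def \<theta>2_def by simp
  qed
  define \<kappa> where "\<kappa> = \<sigma> / Im T"
  have kappa: "\<kappa> > 0" unfolding \<kappa>_def using sigma ImT by simp
  have uD: "of_real r * e1 \<in> D" "of_real r * e2 \<in> D" if "r > 0" for r
    using that Ime sigma unfolding memD by (simp_all add: mult_pos_pos)
  have uV: "- Im ((of_real r * e1) * cnj T) / Im T = r * \<kappa>" "- Im ((of_real r * e2) * cnj T) / Im T = r * \<kappa>" for r
  proof -
    have "Im ((of_real r * e1) * cnj T) = r * Im (e1 * cnj T)" by (simp add: mult.assoc)
    thus "- Im ((of_real r * e1) * cnj T) / Im T = r * \<kappa>" using Ime unfolding \<kappa>_def by simp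
    have "Im ((of_real r * e2) * cnj T) = r * Im (e2 * cnj T)" by (simp add: mult.assoc)
    thus "- Im ((of_real r * e2) * cnj T) / Im T = r * \<kappa>" using Ime unfolding \<kappa>_def by simp
  qed
  have Lncis: "Ln (of_real r * cis \<theta>) = of_real (ln r) + \<i> * of_real \<theta>" if "r > 0" "-pi < \<theta>" "\<theta> \<le> pi" for r \<theta>
  proof -
    have "Ln (cis \<theta>) = \<i> * of_real \<theta>" unfolding cis_conv_exp using that by (intro Ln_exp) auto
    moreover have "Ln (of_real r * cis \<theta>) = of_real (ln r) + Ln (cis \<theta>)"
      using Ln_times_of_real[of r "cis \<theta>"] that Ln_of_real[of r] by simp
    ultimately show ?thesis by simp
  qed
  have Q12: "Q (of_real r * e1) = Q (of_real r * e2)" if "r > 0" for r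
  proof -
    have "Ln (of_real r * e1) / of_real \<rho> = Ln (of_real r * e2) / of_real \<rho> + 2 * of_real pi * \<i>"
      unfolding e1_def e2_def Lncis[OF that th(1,2)] Lncis[OF that th(3,4)]
      using rho0 th12 by (simp add: field_simps)
    hence "exp (Ln (of_real r * e1) / of_real \<rho>) = exp (Ln (of_real r * e2) / of_real \<rho>)"
      by (simp add: exp_add)
    thus ?thesis unfolding Q_def by simp
  qed
  define K where "K = c * (e1 - e2)"
  have K0: "K \<noteq> 0"
  proof -
    have ne: "\<theta>1 \<noteq> \<theta>2"
    proof
      assume "\<theta>1 = \<theta>2"
      hence "2 * pi * \<rho> = 0" using th12 by simp
      thus False using rho0 pi_gt_zero by simp
    qed
    have "Arg e1 \<noteq> Arg e2" unfolding e1_def e2_def using th ne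
      by (simp add: Arg_cis)
    hence "e1 \<noteq> e2" by auto
    thus ?thesis unfolding K_def using c0 by simp
  qed
  define r1 where "r1 = max (V0 / \<kappa>) ((2 * norm T + 2) / \<kappa>) + 1"
  have bound: "norm (exp (of_real r * K) - 1) \<le> (12 / \<kappa>) * inverse r" if r: "r \<ge> r1" for r
  proof -
    have rk: "r * \<kappa> \<ge> V0" "r * \<kappa> \<ge> 2 * norm T + 2"
    proof -
      have "r \<ge> V0 / \<kappa>" "r \<ge> (2 * norm T + 2) / \<kappa>" using r unfolding r1_def by auto
      thus "r * \<kappa> \<ge> V0" "r * \<kappa> \<ge> 2 * norm T + 2" using kappa by (simp_all add: field_simps)
    qed
    have rpos: "r > 0"
    proof -
      have "(2 * norm T + 2) / \<kappa> > 0" using kappa by (simp add: add_nonneg_pos)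
      thus ?thesis using r unfolding r1_def by linarith
    qed
    obtain \<epsilon>1 where E1: "Q (of_real r * e1) = A * exp (c * (of_real r * e1) + \<epsilon>1)" "norm \<epsilon>1 \<le> 1 / (r * \<kappa> - norm T)"
      using GG[OF uD(1)[OF rpos] uV(1)[symmetric]] rk by blast
    obtain \<epsilon>2 where E2: "Q (of_real r * e2) = A * exp (c * (of_real r * e2) + \<epsilon>2)" "norm \<epsilon>2 \<le> 1 / (r * \<kappa> - norm T)"
      using GG[OF uD(2)[OF rpos] uV(2)[symmetric]] rk by blast
    have "exp (c * (of_real r * e1) + \<epsilon>1) = exp (c * (of_real r * e2) + \<epsilon>2)"
      using E1(1) E2(1) Q12[OF rpos] A0 by simp
    hence "exp (of_real r * K) = exp (\<epsilon>2 - \<epsilon>1)"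
    proof -
      assume h: "exp (c * (of_real r * e1) + \<epsilon>1) = exp (c * (of_real r * e2) + \<epsilon>2)"
      have "of_real r * K = (c * (of_real r * e1) + \<epsilon>1) - (c * (of_real r * e2) + \<epsilon>2) + (\<epsilon>2 - \<epsilon>1)"
        unfolding K_def by (simp add: algebra_simps)
      hence "exp (of_real r * K) = exp (c * (of_real r * e1) + \<epsilon>1) / exp (c * (of_real r * e2) + \<epsilon>2) * exp (\<epsilon>2 - \<epsilon>1)"
        by (simp add: exp_add exp_diff)
      thus ?thesis unfolding h by simp
    qed
    moreover have den: "r * \<kappa> - norm T \<ge> r * \<kappa> / 2" "r * \<kappa> - norm T \<ge> 2"
      using rk norm_ge_zero[of T] by linarith+
    have de: "norm (\<epsilon>2 - \<epsilon>1) \<le> 2 / (r * \<kappa> - norm T)"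
      using norm_triangle_ineq4[of \<epsilon>2 \<epsilon>1] E1(2) E2(2) by simp
    have "2 / (r * \<kappa> - norm T) \<le> 1" using den by simp
    hence "norm (exp (\<epsilon>2 - \<epsilon>1) - 1) \<le> 3 * norm (\<epsilon>2 - \<epsilon>1)" using de by (intro exp_minus_one_bound) linarith
    moreover have "3 * norm (\<epsilon>2 - \<epsilon>1) \<le> 6 / (r * \<kappa> - norm T)" using de by simp
    moreover have "6 / (r * \<kappa> - norm T) \<le> 6 / (r * \<kappa> / 2)"
      using den rpos kappa by (intro frac_le) auto
    moreover have "6 / (r * \<kappa> / 2) = (12 / \<kappa>) * inverse r" using rpos kappa by (simp add: field_simps)
    ultimately show ?thesis by simp
  qed
  define f where "f = (\<lambda>r::real. exp (of_real r * K))"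
  have flim: "(f \<longlongrightarrow> 1) at_top"
  proof (rule LIM_zero_cancel, rule Lim_null_comparison)
    show "eventually (\<lambda>r. norm (f r - 1) \<le> (12 / \<kappa>) * inverse r) at_top"
      unfolding f_def using bound eventually_at_top_linorder by blast
    have "((\<lambda>r::real. (12 / \<kappa>) * inverse r) \<longlongrightarrow> (12 / \<kappa>) * 0) at_top"
      by (intro tendsto_mult tendsto_const tendsto_inverse_0_at_top filterlim_ident)
    thus "((\<lambda>r::real. (12 / \<kappa>) * inverse r) \<longlongrightarrow> 0) at_top" by simp
  qed
  have fs: "f s = 1" for s
  proof -
    have "filterlim (\<lambda>r::real. s + r) at_top at_top"
      by (rule filterlim_tendsto_add_at_top[OF tendsto_const filterlim_ident])
    hence "((\<lambda>r. f (s + r)) \<longlongrightarrow> 1) at_top" using filterlim_compose[OF flim] by blast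
    moreover have "f (s + r) = f r * f s" for r unfolding f_def by (simp add: algebra_simps exp_add[symmetric])
    ultimately have "((\<lambda>r. f r * f s) \<longlongrightarrow> 1) at_top" by simp
    moreover have "((\<lambda>r. f r * f s) \<longlongrightarrow> 1 * f s) at_top" by (intro tendsto_mult flim tendsto_const)
    ultimately show ?thesis using tendsto_unique[of "at_top :: real filter"] by fastforce
  qed
  define s0 where "s0 = pi / (2 * norm K)"
  have nK: "norm K > 0" using K0 by simp
  have "exp (of_real s0 * K) = 1" using fs[of s0] unfolding f_def .
  then obtain n :: int where n: "Re (of_real s0 * K) = 0" "Im (of_real s0 * K) = of_int (2 * n) * pi"
    unfolding exp_eq_1 by blast
  have s0pos: "s0 > 0" unfolding s0_def using nK by simp
  have "norm (of_real s0 * K) = s0 * norm K" using s0pos by (simp only: norm_mult norm_of_real abs_of_pos)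
  also have "\<dots> = pi / 2" unfolding s0_def using nK by simp
  finally have ns: "norm (of_real s0 * K) = pi / 2" .
  have "\<bar>Im (of_real s0 * K)\<bar> \<le> pi / 2" using abs_Im_le_cmod[of "of_real s0 * K"] ns by linarith
  hence "\<bar>of_int (2 * n) * pi\<bar> \<le> pi / 2" using n(2) by simp
  hence "\<bar>real_of_int (2 * n)\<bar> * pi \<le> 1/2 * pi" by (simp add: abs_mult)
  hence "\<bar>real_of_int (2 * n)\<bar> \<le> 1/2" using pi_gt_zero by (simp only: mult_le_cancel_right)
  hence "n = 0" by linarith
  hence "of_real s0 * K = 0" using n by (simp add: complex_eq_iff)
  thus False using s0pos K0 by simp
qed

end
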